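(* Let $(X,G)$ be topologically transitive, let $X_0$ be a dense $G$-invariant subset of $X_t$, and let $\lambda$ be a $G$-invariant Borel probability measure on $X$ with $\lambda(X_0)=1$ ($X_0$ assumed $\lambda$-measurable). Then $S^{eq}_0\subseteq\bigcap_{N\in\mathcal N}K_0(N)$.
   Context: $G$ is a group acting by homeomorphisms $x\mapsto gx$ on a compact metrizable space $X$, topologically transitive; $X_t:=\{x\in X:\overline{Gx}=X\}$. $\mathcal N$ is the family of all closed $G$-invariant (for the diagonal action) subsets of $X^2$; for $N\in\mathcal N$, $N_x:=\{y:(x,y)\in N\}$ and $d_N(x,x'):=\lambda(N_x\triangle N_{x'})$; $K_0(N):=\{(x,x')\in X_0^2:d_N(x,x')=0\}$. For a continuous $G$-equivariant map $\pi:X_0\to Y$ into a compact metrizable minimal equicontinuous system $(Y,G)$, $S^\pi_0:=\{(x,x')\in X_0^2:\pi(x)=\pi(x')\}$, and $S^{eq}_0:=\bigcap_\pi S^\pi_0$ over all such $Y,\pi$. *)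

theory Defs
  imports "HOL-Probability.Probability" "HOL-Algebra.Group"
begin

definition homeo_action :: "('g, 'm) monoid_scheme \<Rightarrow> 'a::topological_space set \<Rightarrow> ('g \<Rightarrow> 'a \<Rightarrow> 'a) \<Rightarrow> bool" where
  "homeo_action G S act \<longleftrightarrow>
     group G \<and>
     (\<forall>g\<in>carrier G. \<forall>x\<in>S. act g x \<in> S) \<and>
     (\<forall>g\<in>carrier G. continuous_on S (act g)) \<and>
     (\<forall>x\<in>S. act \<one>\<^bsub>G\<^esub> x = x) \<and>
     (\<forall>g\<in>carrier G. \<forall>h\<in>carrier G. \<forall>x\<in>S. act (g \<otimes>\<^bsub>G\<^esub> h) x = act g (act h x))"

definition orbit :: "('g, 'm) monoid_scheme \<Rightarrow> ('g \<Rightarrow> 'a \<Rightarrow> 'a) \<Rightarrow> 'a \<Rightarrow> 'a set" where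
  "orbit G act x = (\<lambda>g. act g x) ` carrier G"

definition top_transitive :: "('g, 'm) monoid_scheme \<Rightarrow> 'a::topological_space set \<Rightarrow> ('g \<Rightarrow> 'a \<Rightarrow> 'a) \<Rightarrow> bool" where
  "top_transitive G S act \<longleftrightarrow>
     (\<forall>U V. openin (top_of_set S) U \<longrightarrow> openin (top_of_set S) V \<longrightarrow> U \<noteq> {} \<longrightarrow> V \<noteq> {} \<longrightarrow>
        (\<exists>g\<in>carrier G. act g ` U \<inter> V \<noteq> {}))"

definition transitive_points :: "('g, 'm) monoid_scheme \<Rightarrow> 'a::topological_space set \<Rightarrow> ('g \<Rightarrow> 'a \<Rightarrow> 'a) \<Rightarrow> 'a set" where
  "transitive_points G S act = {x\<in>S. closure (orbit G act x) = S}"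

definition G_invariant :: "('g, 'm) monoid_scheme \<Rightarrow> ('g \<Rightarrow> 'a \<Rightarrow> 'a) \<Rightarrow> 'a set \<Rightarrow> bool" where
  "G_invariant G act A \<longleftrightarrow> (\<forall>g\<in>carrier G. act g ` A = A)"

definition closed_inv_relations :: "('g, 'm) monoid_scheme \<Rightarrow> 'a::topological_space set \<Rightarrow> ('g \<Rightarrow> 'a \<Rightarrow> 'a) \<Rightarrow> ('a \<times> 'a) set set" where
  "closed_inv_relations G S act =
     {N. N \<subseteq> S \<times> S \<and> closed N \<and> G_invariant G (\<lambda>g (x, y). (act g x, act g y)) N}"

definition rel_section :: "('a \<times> 'b) set \<Rightarrow> 'a \<Rightarrow> 'b set" where
  "rel_section N x = {y. (x, y) \<in> N}"

definition d_N :: "'a measure \<Rightarrow> ('a \<times> 'a) set \<Rightarrow> 'a \<Rightarrow> 'a \<Rightarrow> real" where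
  "d_N lam N x x' = measure lam ((rel_section N x - rel_section N x') \<union> (rel_section N x' - rel_section N x))"

definition K0 :: "'a measure \<Rightarrow> 'a set \<Rightarrow> ('a \<times> 'a) set \<Rightarrow> ('a \<times> 'a) set" where
  "K0 lam X0 N = {(x, x'). x \<in> X0 \<and> x' \<in> X0 \<and> d_N lam N x x' = 0}"

text \<open>Every compact metrizable space
  embeds into the Hilbert cube, so Y is taken as a compact subset of nat \<Rightarrow> real
  (product topology, with its standard compatible metric).\<close>
definition minimal_equicontinuous_system ::
  "('g, 'm) monoid_scheme \<Rightarrow> (nat \<Rightarrow> real) set \<Rightarrow> ('g \<Rightarrow> (nat \<Rightarrow> real) \<Rightarrow> (nat \<Rightarrow> real)) \<Rightarrow> bool" where
  "minimal_equicontinuous_system G Y actY \<longleftrightarrow>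
     compact Y \<and> Y \<noteq> {} \<and> homeo_action G Y actY \<and>
     (\<forall>y\<in>Y. closure (orbit G actY y) = Y) \<and>
     (\<forall>e>0. \<exists>d>0. \<forall>y\<in>Y. \<forall>y'\<in>Y. dist y y' < d \<longrightarrow>
        (\<forall>g\<in>carrier G. dist (actY g y) (actY g y') < e))"

definition equivariant_factor ::
  "('g, 'm) monoid_scheme \<Rightarrow> 'a::topological_space set \<Rightarrow> ('g \<Rightarrow> 'a \<Rightarrow> 'a) \<Rightarrow>
   (nat \<Rightarrow> real) set \<Rightarrow> ('g \<Rightarrow> (nat \<Rightarrow> real) \<Rightarrow> (nat \<Rightarrow> real)) \<Rightarrow> ('a \<Rightarrow> nat \<Rightarrow> real) \<Rightarrow> bool" where
  "equivariant_factor G X0 act Y actY \<pi> \<longleftrightarrow>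
     continuous_on X0 \<pi> \<and> \<pi> ` X0 \<subseteq> Y \<and>
     (\<forall>g\<in>carrier G. \<forall>x\<in>X0. \<pi> (act g x) = actY g (\<pi> x))"

definition S_pi :: "'a set \<Rightarrow> ('a \<Rightarrow> 'b) \<Rightarrow> ('a \<times> 'a) set" where
  "S_pi X0 \<pi> = {(x, x'). x \<in> X0 \<and> x' \<in> X0 \<and> \<pi> x = \<pi> x'}"

definition S_eq :: "('g, 'm) monoid_scheme \<Rightarrow> 'a::topological_space set \<Rightarrow> ('g \<Rightarrow> 'a \<Rightarrow> 'a) \<Rightarrow> ('a \<times> 'a) set" where
  "S_eq G X0 act = (X0 \<times> X0) \<inter>
     (\<Inter>{S_pi X0 \<pi> | \<pi>. \<exists>Y actY. minimal_equicontinuous_system G Y actY \<and> equivariant_factor G X0 act Y actY \<pi>})"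

end

theory Submission
  imports Defs
begin


locale setting = prob_space lam for lam :: "'a::metric_space measure" +
  fixes G :: "('g, 'm) monoid_scheme" and X X0 :: "'a set" and act :: "'g \<Rightarrow> 'a \<Rightarrow> 'a"
    and N :: "('a \<times> 'a) set"
  assumes cpt: "compact X"
    and ha: "homeo_action G X act"
    and X0t: "X0 \<subseteq> transitive_points G X act"
    and clX0: "closure X0 = X"
    and invX0: "G_invariant G act X0"
    and setsl: "sets lam = sets (restrict_space borel X)"
    and mpres: "\<forall>g\<in>carrier G. \<forall>A\<in>sets lam. measure lam (act g -` A \<inter> X) = measure lam A"
    and X0m: "X0 \<in> sets lam"
    and X01: "measure lam X0 = 1"
    and NN: "N \<in> closed_inv_relations G X act"
begin

abbreviation "sec x \<equiv> rel_section N x"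
abbreviation "D x y \<equiv> d_N lam N x y"

lemma grp: "group G" using ha unfolding homeo_action_def by blast

lemma act_X: "g \<in> carrier G \<Longrightarrow> x \<in> X \<Longrightarrow> act g x \<in> X"
  using ha unfolding homeo_action_def by blast

lemma act_cont: "g \<in> carrier G \<Longrightarrow> continuous_on X (act g)"
  using ha unfolding homeo_action_def by blast

lemma act_one: "x \<in> X \<Longrightarrow> act \<one>\<^bsub>G\<^esub> x = x"
  using ha unfolding homeo_action_def by blast

lemma act_mult: "g \<in> carrier G \<Longrightarrow> h \<in> carrier G \<Longrightarrow> x \<in> X \<Longrightarrow> act (g \<otimes>\<^bsub>G\<^esub> h) x = act g (act h x)"
  using ha unfolding homeo_action_def by blast

lemma inv_closed: "g \<in> carrier G \<Longrightarrow> inv\<^bsub>G\<^esub> g \<in> carrier G"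
  using group.inv_closed[OF grp] by blast

lemma act_inv1: "g \<in> carrier G \<Longrightarrow> x \<in> X \<Longrightarrow> act (inv\<^bsub>G\<^esub> g) (act g x) = x"
proof -
  assume g: "g \<in> carrier G" and x: "x \<in> X"
  have "act (inv\<^bsub>G\<^esub> g) (act g x) = act (inv\<^bsub>G\<^esub> g \<otimes>\<^bsub>G\<^esub> g) x"
    using act_mult[OF inv_closed[OF g] g x] by simp
  also have "\<dots> = act \<one>\<^bsub>G\<^esub> x" using group.l_inv[OF grp g] by simp
  finally show ?thesis using act_one[OF x] by simp
qed

lemma act_inv2: "g \<in> carrier G \<Longrightarrow> x \<in> X \<Longrightarrow> act g (act (inv\<^bsub>G\<^esub> g) x) = x"
proof -
  assume g: "g \<in> carrier G" and x: "x \<in> X"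
  have "act g (act (inv\<^bsub>G\<^esub> g) x) = act (g \<otimes>\<^bsub>G\<^esub> inv\<^bsub>G\<^esub> g) x"
    using act_mult[OF g inv_closed[OF g] x] by simp
  also have "\<dots> = act \<one>\<^bsub>G\<^esub> x" using group.r_inv[OF grp g] by simp
  finally show ?thesis using act_one[OF x] by simp
qed

lemma X0X: "X0 \<subseteq> X" using X0t unfolding transitive_points_def by blast

lemma act_X0: "g \<in> carrier G \<Longrightarrow> x \<in> X0 \<Longrightarrow> act g x \<in> X0"
  using invX0 unfolding G_invariant_def by blast

lemma orbit_dense: "x \<in> X0 \<Longrightarrow> closure (orbit G act x) = X"
  using X0t unfolding transitive_points_def by blast

lemma spaceX: "space lam = X"
  using sets_eq_imp_space_eq[OF setsl] by (simp add: space_restrict_space)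

lemma closedX: "closed X" using cpt compact_imp_closed by blast

lemma sets_iff: "A \<in> sets lam \<longleftrightarrow> A \<subseteq> X \<and> A \<in> sets borel"
  unfolding setsl by (rule sets_restrict_space_iff) (use closedX in simp)

lemma NsubXX: "N \<subseteq> X \<times> X" and Nclosed: "closed N"
  and Ninv: "\<And>g. g \<in> carrier G \<Longrightarrow> (\<lambda>(x, y). (act g x, act g y)) ` N = N"
  using NN unfolding closed_inv_relations_def G_invariant_def by auto

lemma sec_sub: "sec x \<subseteq> X"
  using NsubXX unfolding rel_section_def by auto

lemma sec_closed: "closed (sec x)"
proof -
  have "sec x = Pair x -` N" unfolding rel_section_def by auto
  moreover have "closed (Pair x -` N)"
    by (rule continuous_closed_vimage[OF Nclosed]) (intro continuous_intros)
  ultimately show ?thesis by simp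
qed

lemma sec_meas: "sec x \<in> sets lam"
  unfolding sets_iff using sec_sub sec_closed borel_closed by blast

lemma sec_act: assumes g: "g \<in> carrier G" and x: "x \<in> X"
  shows "sec (act g x) = act g ` sec x"
proof
  show "act g ` sec x \<subseteq> sec (act g x)"
  proof
    fix y assume "y \<in> act g ` sec x"
    then obtain b where b: "(x, b) \<in> N" "y = act g b" unfolding rel_section_def by auto
    then have "(act g x, act g b) \<in> (\<lambda>(x, y). (act g x, act g y)) ` N" by force
    then show "y \<in> sec (act g x)" using Ninv[OF g] b unfolding rel_section_def by auto
  qed
next
  show "sec (act g x) \<subseteq> act g ` sec x"
  proof
    fix y assume "y \<in> sec (act g x)"
    then have "(act g x, y) \<in> (\<lambda>(x, y). (act g x, act g y)) ` N" using Ninv[OF g] unfolding rel_section_def by auto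
    then obtain a b where ab: "(a, b) \<in> N" "act g a = act g x" "act g b = y" by auto
    have "a \<in> X" using ab NsubXX by auto
    then have "a = x" using ab act_inv1[OF g] x by metis
    then show "y \<in> act g ` sec x" using ab unfolding rel_section_def by auto
  qed
qed

lemma img_pre: assumes g: "g \<in> carrier G" and A: "A \<subseteq> X"
  shows "act g ` A = act (inv\<^bsub>G\<^esub> g) -` A \<inter> X"
proof
  show "act g ` A \<subseteq> act (inv\<^bsub>G\<^esub> g) -` A \<inter> X"
    using A act_inv1[OF g] act_X[OF g] by auto
  show "act (inv\<^bsub>G\<^esub> g) -` A \<inter> X \<subseteq> act g ` A"
  proof
    fix y assume y: "y \<in> act (inv\<^bsub>G\<^esub> g) -` A \<inter> X"
    then have "y = act g (act (inv\<^bsub>G\<^esub> g) y)" using act_inv2[OF g] by auto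
    then show "y \<in> act g ` A" using y by blast
  qed
qed

lemma pre_meas: assumes h: "h \<in> carrier G" and A: "A \<in> sets lam"
  shows "act h -` A \<inter> X \<in> sets lam"
proof -
  have "act h \<in> measurable (restrict_space borel X) (restrict_space borel X)"
    by (rule measurable_restrict_space2) (use act_X[OF h] borel_measurable_continuous_on_restrict[OF act_cont[OF h]] in \<open>auto simp: space_restrict_space\<close>)
  then have "act h -` A \<inter> space (restrict_space borel X) \<in> sets (restrict_space borel X)"
    using A setsl measurable_sets by blast
  then show ?thesis using setsl by (simp add: space_restrict_space)
qed

lemma meas_img: assumes g: "g \<in> carrier G" and A: "A \<in> sets lam"
  shows "measure lam (act g ` A) = measure lam A"
  using img_pre[OF g] A sets_iff mpres inv_closed[OF g] by simp

lemma D_def': "D x y = measure lam ((sec x - sec y) \<union> (sec y - sec x))"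
  unfolding d_N_def by simp

lemma SD_meas: "(sec x - sec y) \<union> (sec y - sec x) \<in> sets lam"
  using sec_meas by auto

lemma D_nonneg: "D x y \<ge> 0" unfolding D_def' by simp

lemma D_refl: "D x x = 0" unfolding D_def' by simp

lemma D_sym: "D x y = D y x" unfolding D_def' by (simp add: Un_commute)

lemma D_le1: "D x y \<le> 1" unfolding D_def' by (rule prob_le_1)

lemma D_tri: "D x z \<le> D x y + D y z"
proof -
  have "D x z \<le> measure lam (((sec x - sec y) \<union> (sec y - sec x)) \<union> ((sec y - sec z) \<union> (sec z - sec y)))"
    unfolding D_def' by (rule finite_measure_mono) (use SD_meas in auto)
  also have "\<dots> \<le> D x y + D y z"
    unfolding D_def' by (rule measure_subadditive) (use SD_meas in auto)
  finally show ?thesis .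
qed

lemma D_act: assumes g: "g \<in> carrier G" and x: "x \<in> X" and y: "y \<in> X"
  shows "D (act g x) (act g y) = D x y"
proof -
  have inj: "inj_on (act g) X" by (metis act_inv1[OF g] inj_onI)
  have "(sec (act g x) - sec (act g y)) \<union> (sec (act g y) - sec (act g x))
     = act g ` ((sec x - sec y) \<union> (sec y - sec x))"
    unfolding sec_act[OF g x] sec_act[OF g y] image_Un
    using inj_on_image_set_diff[OF inj, of "sec x" "sec y"] inj_on_image_set_diff[OF inj, of "sec y" "sec x"] sec_sub[of x] sec_sub[of y]
    by auto
  then show ?thesis unfolding D_def' using meas_img[OF g SD_meas] by simp
qed

lemma f_act: assumes g: "g \<in> carrier G" and x: "x \<in> X"
  shows "measure lam (sec (act g x)) = measure lam (sec x)"
  using sec_act[OF g x] meas_img[OF g sec_meas] by simp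

end



context setting begin

lemma sec_diff_lim:
  assumes xs: "xs \<longlonglongrightarrow> x" and xX: "x \<in> X"
  shows "(\<lambda>k. measure lam (sec (xs k) - sec x)) \<longlonglongrightarrow> 0"
proof -
  define B where "B m = (\<Union>k. sec (xs (k + m)) - sec x)" for m
  have Bm: "B m \<in> sets lam" for m
    unfolding B_def using sec_meas by (intro sets.countable_UN) auto
  have dec: "decseq B"
    unfolding decseq_Suc_iff B_def
  proof
    fix m show "(\<Union>k. sec (xs (k + Suc m)) - sec x) \<subseteq> (\<Union>k. sec (xs (k + m)) - sec x)"
    proof
      fix y assume "y \<in> (\<Union>k. sec (xs (k + Suc m)) - sec x)"
      then obtain k where "y \<in> sec (xs (k + Suc m)) - sec x" by blast
      then have "y \<in> sec (xs (Suc k + m)) - sec x" by simp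
      then show "y \<in> (\<Union>k. sec (xs (k + m)) - sec x)" by blast
    qed
  qed
  have empty: "(\<Inter>m. B m) = {}"
  proof (rule ccontr)
    assume "(\<Inter>m. B m) \<noteq> {}"
    then obtain y where y: "\<And>m. y \<in> B m" by blast
    have ynot: "y \<notin> sec x" using y[of 0] unfolding B_def by blast
    have "(x, y) \<in> closure N"
      unfolding closure_approachable
    proof (intro allI impI)
      fix e :: real assume e: "e > 0"
      obtain m where m: "\<And>n. n \<ge> m \<Longrightarrow> dist (xs n) x < e"
        using xs e unfolding LIMSEQ_def by blast
      obtain k where "y \<in> sec (xs (k + m))" using y[of m] unfolding B_def by blast
      then have "(xs (k + m), y) \<in> N" unfolding rel_section_def by simp
      moreover have "dist (xs (k + m), y) (x, y) < e"
        using m[of "k+m"] by (simp add: dist_Pair_Pair)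
      ultimately show "\<exists>p\<in>N. dist p (x, y) < e" by blast
    qed
    then have "(x, y) \<in> N" using Nclosed by (simp add: closure_closed)
    then show False using ynot unfolding rel_section_def by simp
  qed
  have "(\<lambda>m. measure lam (B m)) \<longlonglongrightarrow> measure lam (\<Inter>m. B m)"
    by (rule finite_Lim_measure_decseq) (use Bm dec in auto)
  then have lim: "(\<lambda>m. measure lam (B m)) \<longlonglongrightarrow> 0" using empty by simp
  have le: "measure lam (sec (xs m) - sec x) \<le> measure lam (B m)" for m
  proof (rule finite_measure_mono)
    show "sec (xs m) - sec x \<subseteq> B m" unfolding B_def
    proof
      fix y assume "y \<in> sec (xs m) - sec x"
      then have "y \<in> sec (xs (0 + m)) - sec x" by simp
      then show "y \<in> (\<Union>k. sec (xs (k + m)) - sec x)" by blast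
    qed
  qed (rule Bm)
  show ?thesis
    by (rule tendsto_sandwich[OF _ _ tendsto_const lim]) (use le in auto)
qed

lemma f_le: assumes x: "x \<in> X0" and x': "x' \<in> X0"
  shows "measure lam (sec x) \<le> measure lam (sec x')"
proof -
  have "x' \<in> closure (orbit G act x)" using orbit_dense[OF x] x' X0X by auto
  then obtain s where s: "\<And>n. s n \<in> orbit G act x" and lim: "s \<longlonglongrightarrow> x'"
    unfolding closure_sequential by blast
  have l0: "(\<lambda>n. measure lam (sec (s n) - sec x')) \<longlonglongrightarrow> 0"
    by (rule sec_diff_lim[OF lim]) (use x' X0X in auto)
  have "measure lam (sec x) - measure lam (sec x') \<le> measure lam (sec (s n) - sec x')" for n
  proof -
    obtain g where g: "g \<in> carrier G" "s n = act g x" using s[of n] unfolding orbit_def by blast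
    have "measure lam (sec (s n)) = measure lam (sec x)" using g f_act x X0X by auto
    moreover have "measure lam (sec (s n)) \<le> measure lam (sec x' \<union> (sec (s n) - sec x'))"
      by (rule finite_measure_mono) (use sec_meas in auto)
    moreover have "measure lam (sec x' \<union> (sec (s n) - sec x')) \<le> measure lam (sec x') + measure lam (sec (s n) - sec x')"
      by (rule measure_subadditive) (use sec_meas in auto)
    ultimately show ?thesis by linarith
  qed
  then have "measure lam (sec x) - measure lam (sec x') \<le> 0"
    using LIMSEQ_le_const[OF l0] by blast
  then show ?thesis by simp
qed

lemma f_eq: "x \<in> X0 \<Longrightarrow> x' \<in> X0 \<Longrightarrow> measure lam (sec x) = measure lam (sec x')"
  using f_le by (meson antisym)

lemma D_two: assumes x: "x \<in> X0" and x': "x' \<in> X0"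
  shows "D x' x = 2 * measure lam (sec x' - sec x)"
proof -
  have "D x' x = measure lam (sec x' - sec x) + measure lam (sec x - sec x')"
    unfolding D_def' by (rule finite_measure_Union) (use sec_meas in auto)
  moreover have "measure lam (sec x' - sec x) = measure lam (sec x') - measure lam (sec x' \<inter> sec x)"
    by (rule finite_measure_Diff') (use sec_meas in auto)
  moreover have "measure lam (sec x - sec x') = measure lam (sec x) - measure lam (sec x \<inter> sec x')"
    by (rule finite_measure_Diff') (use sec_meas in auto)
  moreover have "sec x \<inter> sec x' = sec x' \<inter> sec x" by blast
  ultimately show ?thesis using f_eq[OF x x'] by simp
qed

lemma D_seq: assumes xs: "\<And>k. xs k \<in> X0" and x: "x \<in> X0" and lim: "xs \<longlonglongrightarrow> x"
  shows "(\<lambda>k. D (xs k) x) \<longlonglongrightarrow> 0"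
proof -
  have "(\<lambda>k. 2 * measure lam (sec (xs k) - sec x)) \<longlonglongrightarrow> 2 * 0"
    by (intro tendsto_mult tendsto_const sec_diff_lim[OF lim]) (use x X0X in auto)
  then show ?thesis using D_two[OF x xs] by simp
qed

lemma D_cont: assumes x: "x \<in> X0" and e: "e > 0"
  shows "\<exists>d>0. \<forall>u\<in>X0. dist u x < d \<longrightarrow> D u x < e"
proof (rule ccontr)
  assume "\<not> ?thesis"
  then have "\<forall>k. \<exists>u. u \<in> X0 \<and> dist u x < inverse (real (Suc k)) \<and> e \<le> D u x"
    by (metis not_le inverse_positive_iff_positive of_nat_0_less_iff zero_less_Suc)
  then obtain us where us: "\<And>k. us k \<in> X0" "\<And>k. dist (us k) x < inverse (real (Suc k))" "\<And>k. e \<le> D (us k) x"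
    by metis
  have "(\<lambda>k. dist (us k) x) \<longlonglongrightarrow> 0"
    by (rule tendsto_sandwich[OF _ _ tendsto_const LIMSEQ_inverse_real_of_nat]) (auto intro!: always_eventually less_imp_le us(2) simp del: of_nat_Suc)
  then have "us \<longlonglongrightarrow> x" using tendsto_dist_iff by blast
  then have "(\<lambda>k. D (us k) x) \<longlonglongrightarrow> 0" using D_seq us(1) x by blast
  then have "e \<le> 0" using LIMSEQ_le_const us(3) by blast
  then show False using e by simp
qed

end


context setting begin

lemma X0ne: "X0 \<noteq> {}" using X01 by auto

lemma prob_meas_zero_null: "A \<in> sets lam \<Longrightarrow> measure lam A = 0 \<Longrightarrow> A \<in> null_sets lam"
  by (simp add: null_sets_def emeasure_eq_measure)

lemma ball_pos: assumes z: "z \<in> X0" and d: "d > 0"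
  shows "measure lam (ball z d \<inter> X0) > 0"
proof (rule ccontr)
  define U where "U = ball z d"
  assume "\<not> ?thesis"
  then have U0: "measure lam (U \<inter> X0) = 0" unfolding U_def using measure_nonneg[of lam "ball z d \<inter> X0"] by linarith
  have UX0: "U \<inter> X0 \<in> sets lam"
  proof -
    have "U \<inter> X \<in> sets lam" unfolding sets_iff U_def using closedX by (auto intro!: sets.Int borel_closed)
    moreover have "U \<inter> X0 = (U \<inter> X) \<inter> X0" using X0X by blast
    ultimately show ?thesis using sets.Int[OF _ X0m] by simp
  qed
  have "\<forall>n::nat. \<exists>k. finite k \<and> X \<subseteq> (\<Union>c\<in>k. ball c (inverse (real (Suc n))))"
    using cpt unfolding compact_eq_totally_bounded by simp
  then obtain K where K: "\<And>n. finite (K n)" "\<And>n. X \<subseteq> (\<Union>c\<in>K n. ball c (inverse (real (Suc n))))"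
    by metis
  define I where "I = (SIGMA n:UNIV. K n)"
  have cI: "countable I" unfolding I_def using K(1) by (intro countable_SIGMA) (auto intro: countable_finite)
  define gi where "gi i = (if \<exists>g\<in>carrier G. act g ` (ball (snd i) (inverse (real (Suc (fst i)))) \<inter> X) \<subseteq> U
      then SOME g. g\<in>carrier G \<and> act g ` (ball (snd i) (inverse (real (Suc (fst i)))) \<inter> X) \<subseteq> U else \<one>\<^bsub>G\<^esub>)" for i
  have gi_in: "gi i \<in> carrier G" for i
  proof (cases "\<exists>g\<in>carrier G. act g ` (ball (snd i) (inverse (real (Suc (fst i)))) \<inter> X) \<subseteq> U")
    case True
    then show ?thesis unfolding gi_def using someI_ex[of "\<lambda>g. g\<in>carrier G \<and> act g ` (ball (snd i) (inverse (real (Suc (fst i)))) \<inter> X) \<subseteq> U"]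
      by auto
  next
    case False
    then show ?thesis unfolding gi_def using monoid.one_closed[OF group.is_monoid[OF grp]] by auto
  qed
  have gi_good: "act (gi i) ` (ball (snd i) (inverse (real (Suc (fst i)))) \<inter> X) \<subseteq> U"
    if "\<exists>g\<in>carrier G. act g ` (ball (snd i) (inverse (real (Suc (fst i)))) \<inter> X) \<subseteq> U" for i
    using that unfolding gi_def using someI_ex[of "\<lambda>g. g\<in>carrier G \<and> act g ` (ball (snd i) (inverse (real (Suc (fst i)))) \<inter> X) \<subseteq> U"]
    by auto
  have cover: "X0 \<subseteq> (\<Union>i\<in>I. act (gi i) -` (U \<inter> X0) \<inter> X)"
  proof
    fix x assume x: "x \<in> X0"
    have "z \<in> closure (orbit G act x)" using orbit_dense[OF x] z X0X by auto
    then obtain p where p: "p \<in> orbit G act x" "dist p z < d"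
      unfolding closure_approachable using d by blast
    then obtain g where g: "g \<in> carrier G" "act g x \<in> U" unfolding orbit_def U_def
      by (auto simp: dist_commute)
    have "open U" unfolding U_def by simp
    then obtain r where r: "r > 0" "ball (act g x) r \<subseteq> U" using g(2) open_contains_ball by blast
    obtain del where del: "del > 0" "\<forall>x'\<in>X. dist x' x < del \<longrightarrow> dist (act g x') (act g x) < r"
      using act_cont[OF g(1)] x X0X r(1) unfolding continuous_on_iff by blast
    obtain n :: nat where n: "inverse (real (Suc n)) < del / 2"
      using reals_Archimedean del(1) by (metis half_gt_zero_iff)
    obtain c where c: "c \<in> K n" "x \<in> ball c (inverse (real (Suc n)))" using K(2)[of n] x X0X by blast
    have ex: "\<exists>g\<in>carrier G. act g ` (ball (snd (n, c)) (inverse (real (Suc (fst (n, c))))) \<inter> X) \<subseteq> U"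
    proof (intro bexI[OF _ g(1)] subsetI)
      fix y assume "y \<in> act g ` (ball (snd (n, c)) (inverse (real (Suc (fst (n, c))))) \<inter> X)"
      then obtain x' where x': "x' \<in> X" "dist c x' < inverse (real (Suc n))" "y = act g x'" by auto
      have "dist x' x \<le> dist c x' + dist c x" by (metis dist_commute dist_triangle)
      also have "\<dots> < del" using x' c n by simp
      finally have "dist y (act g x) < r" using del x' by auto
      then show "y \<in> U" using r by (auto simp: dist_commute)
    qed
    have "x \<in> ball c (inverse (real (Suc n))) \<inter> X" using c x X0X by auto
    then have "act (gi (n, c)) x \<in> act (gi (n, c)) ` (ball c (inverse (real (Suc n))) \<inter> X)" by blast
    then have "act (gi (n, c)) x \<in> U" using gi_good[OF ex] by auto
    moreover have "act (gi (n, c)) x \<in> X0" using act_X0[OF gi_in x] .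
    moreover have "(n, c) \<in> I" unfolding I_def using c by simp
    ultimately show "x \<in> (\<Union>i\<in>I. act (gi i) -` (U \<inter> X0) \<inter> X)" using x X0X by blast
  qed
  have "(\<Union>i\<in>I. act (gi i) -` (U \<inter> X0) \<inter> X) \<in> null_sets lam"
  proof (rule null_sets_UN'[OF cI])
    fix i show "act (gi i) -` (U \<inter> X0) \<inter> X \<in> null_sets lam"
    proof (rule prob_meas_zero_null)
      show "act (gi i) -` (U \<inter> X0) \<inter> X \<in> sets lam" by (rule pre_meas[OF gi_in UX0])
      show "measure lam (act (gi i) -` (U \<inter> X0) \<inter> X) = 0"
        using mpres gi_in[of i] UX0 U0 by metis
    qed
  qed
  then have "measure lam X0 \<le> 0"
    using finite_measure_mono[OF cover] by (simp add: null_sets_def emeasure_eq_measure)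
  then show False using X01 by simp
qed

end


context setting begin

lemma TB: assumes e: "e > 0"
  shows "\<exists>P. finite P \<and> P \<subseteq> X0 \<and> (\<forall>x\<in>X0. \<exists>p\<in>P. D x p < e)"
proof -
  obtain z where z: "z \<in> X0" using X0ne by blast
  obtain d where d: "d > 0" "\<forall>u\<in>X0. dist u z < d \<longrightarrow> D u z < e/4"
    using D_cont[OF z, of "e/4"] e by auto
  define B where "B = ball z d \<inter> X0"
  define \<beta> where "\<beta> = measure lam B"
  have bpos: "\<beta> > 0" unfolding \<beta>_def B_def by (rule ball_pos[OF z d(1)])
  have Bm: "B \<in> sets lam"
  proof -
    have "ball z d \<inter> X \<in> sets lam" unfolding sets_iff using closedX by (auto intro!: borel_closed)
    moreover have "B = (ball z d \<inter> X) \<inter> X0" unfolding B_def using X0X by blast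
    ultimately show ?thesis using sets.Int[OF _ X0m] by simp
  qed
  define Orb where "Orb = orbit G act z"
  have OrbX0: "Orb \<subseteq> X0" unfolding Orb_def orbit_def using act_X0 z by auto
  define sep where "sep P \<longleftrightarrow> finite P \<and> P \<subseteq> Orb \<and> (\<forall>p\<in>P. \<forall>q\<in>P. p \<noteq> q \<longrightarrow> e/2 \<le> D p q)" for P
  have bound: "real (card P) * \<beta> \<le> 1" if sP: "sep P" for P
  proof -
    have "\<forall>p\<in>P. \<exists>g. g \<in> carrier G \<and> p = act g z" using sP unfolding sep_def Orb_def orbit_def by auto
    then obtain gp where gp: "\<And>p. p \<in> P \<Longrightarrow> gp p \<in> carrier G \<and> p = act (gp p) z" by metis
    define E where "E p = act (inv\<^bsub>G\<^esub> (gp p)) -` B \<inter> X" for p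
    have Em: "E p \<in> sets lam" if "p \<in> P" for p
      unfolding E_def by (rule pre_meas[OF inv_closed Bm]) (use gp that in auto)
    have Emeas: "measure lam (E p) = \<beta>" if "p \<in> P" for p
      unfolding E_def \<beta>_def using mpres inv_closed gp that Bm by metis
    have close: "D u p < e/4" if p: "p \<in> P" and u: "u \<in> E p" for p u
    proof -
      define b where "b = act (inv\<^bsub>G\<^esub> (gp p)) u"
      have g: "gp p \<in> carrier G" using gp p by auto
      have uX: "u \<in> X" and b: "b \<in> B" using u unfolding E_def b_def by auto
      have "u = act (gp p) b" unfolding b_def using act_inv2[OF g uX] by simp
      then have "D u p = D (act (gp p) b) (act (gp p) z)" using gp p by metis
      also have "\<dots> = D b z" using D_act[OF g] b z X0X unfolding B_def by auto
      also have "\<dots> < e/4" using d(2) b unfolding B_def by (auto simp: dist_commute)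
      finally show ?thesis .
    qed
    have disj: "disjoint_family_on E P"
      unfolding disjoint_family_on_def
    proof (intro ballI impI)
      fix p q assume p: "p \<in> P" and q: "q \<in> P" and pq: "p \<noteq> q"
      show "E p \<inter> E q = {}"
      proof (rule ccontr)
        assume "E p \<inter> E q \<noteq> {}"
        then obtain u where "u \<in> E p" "u \<in> E q" by blast
        then have "D u p < e/4" "D u q < e/4" using close p q by auto
        then have "D p q < e/2" using D_tri[of p q u] D_sym[of p u] by linarith
        moreover have "e/2 \<le> D p q" using sP p q pq unfolding sep_def by blast
        ultimately show False by linarith
      qed
    qed
    have "measure lam (\<Union>p\<in>P. E p) = (\<Sum>p\<in>P. measure lam (E p))"
      by (rule finite_measure_finite_Union) (use sP Em disj in \<open>auto simp: sep_def\<close>)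
    also have "\<dots> = real (card P) * \<beta>" using Emeas by simp
    finally have "real (card P) * \<beta> = measure lam (\<Union>p\<in>P. E p)" by simp
    then show ?thesis using prob_le_1 by simp
  qed
  define b where "b = nat \<lceil>1 / \<beta>\<rceil> + 1"
  have cb: "card P < b" if "sep P" for P
  proof -
    have "real (card P) \<le> 1 / \<beta>" using bound[OF that] bpos by (simp add: field_simps)
    then have "real (card P) < real b" unfolding b_def by linarith
    then show ?thesis by simp
  qed
  have "sep {}" unfolding sep_def by simp
  then obtain P0 where P0: "sep P0" "\<And>P. sep P \<Longrightarrow> card P \<le> card P0"
    using ex_has_greatest_nat[of sep "{}" card b] cb by blast
  have onet: "\<exists>p\<in>P0. D q p < e/2" if q: "q \<in> Orb" for q
  proof (rule ccontr)
    assume "\<not> ?thesis"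
    then have far: "\<forall>p\<in>P0. e/2 \<le> D q p" by auto
    then have qn: "q \<notin> P0" using D_refl[of q] e by force
    have "sep (insert q P0)"
      using P0(1) far q unfolding sep_def by (auto simp: D_sym)
    then have "card (insert q P0) \<le> card P0" using P0(2) by blast
    then show False using qn P0(1) unfolding sep_def by simp
  qed
  have "\<forall>x\<in>X0. \<exists>p\<in>P0. D x p < e"
  proof
    fix x assume x: "x \<in> X0"
    obtain d' where d': "d' > 0" "\<forall>u\<in>X0. dist u x < d' \<longrightarrow> D u x < e/2"
      using D_cont[OF x, of "e/2"] e by auto
    have "x \<in> closure Orb" unfolding Orb_def using orbit_dense[OF z] x X0X by auto
    then obtain q where q: "q \<in> Orb" "dist q x < d'" unfolding closure_approachable using d' by blast
    have "D q x < e/2" using d' q OrbX0 by auto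
    moreover obtain p where "p \<in> P0" "D q p < e/2" using onet[OF q(1)] by blast
    ultimately have "D x p < e" using D_tri[of x p q] D_sym[of x q] by linarith
    then show "\<exists>p\<in>P0. D x p < e" using \<open>p \<in> P0\<close> by blast
  qed
  moreover have "finite P0" "P0 \<subseteq> X0" using P0(1) OrbX0 unfolding sep_def by auto
  ultimately show ?thesis by blast
qed

end



lemma summ_terms: "summable (\<lambda>n. (1/2::real)^n * min (dist ((y::nat\<Rightarrow>real) (from_nat n)) (y' (from_nat n))) 1)"
  by (rule summable_comparison_test'[of "\<lambda>n. (1/2)^n"]) (auto simp add: summable_geometric_iff)

lemma dist_fun_le:
  fixes y y' :: "nat \<Rightarrow> real"
  assumes "\<And>n. \<bar>y n - y' n\<bar> \<le> r"
  shows "dist y y' \<le> 2 * r"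
proof -
  have r: "r \<ge> 0" using assms[of 0] by linarith
  have "dist y y' = (\<Sum>n. (1/2)^n * min (dist (y (from_nat n)) (y' (from_nat n))) 1)"
    unfolding dist_fun_def by simp
  also have "\<dots> \<le> (\<Sum>n. (1/2)^n * r)"
  proof (rule suminf_le)
    show "(1/2)^n * min (dist (y (from_nat n)) (y' (from_nat n))) 1 \<le> (1/2)^n * r" for n
      using assms[of "from_nat n"] by (intro mult_left_mono) (auto simp: dist_real_def)
    show "summable (\<lambda>n. (1/2::real)^n * min (dist (y (from_nat n)) (y' (from_nat n))) 1)" by (rule summ_terms)
    show "summable (\<lambda>n. (1/2::real)^n * r)" by (intro summable_mult2) (simp add: summable_geometric_iff)
  qed
  also have "\<dots> = (\<Sum>n. (1/2::real)^n) * r" by (rule suminf_mult2[symmetric]) (simp add: summable_geometric_iff)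
  also have "\<dots> = 2 * r" using suminf_geometric[of "1/2::real"] by simp
  finally show ?thesis .
qed

lemma coord_small:
  fixes y y' :: "nat \<Rightarrow> real"
  assumes "dist y y' < (1/2)^(to_nat n) * min \<eta> 1"
  shows "\<bar>y n - y' n\<bar> < \<eta>"
proof -
  define m where "m = to_nat n"
  have "(\<Sum>i\<in>{m}. (1/2::real)^i * min (dist (y (from_nat i)) (y' (from_nat i))) 1)
        \<le> (\<Sum>i. (1/2)^i * min (dist (y (from_nat i)) (y' (from_nat i))) 1)"
    by (rule sum_le_suminf[OF summ_terms]) auto
  then have "(1/2::real)^m * min (dist (y n) (y' n)) 1 \<le> dist y y'"
    unfolding dist_fun_def m_def by simp
  then have "(1/2::real)^m * min (dist (y n) (y' n)) 1 < (1/2)^m * min \<eta> 1"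
    using assms unfolding m_def by linarith
  then have "min (dist (y n) (y' n)) 1 < min \<eta> 1" by (simp add: mult_less_cancel_left)
  then show ?thesis by (auto simp: dist_real_def min_def split: if_splits)
qed

context setting begin

lemma dense_seq: "\<exists>w::nat\<Rightarrow>'a. (\<forall>n. w n \<in> X0) \<and> (\<forall>x\<in>X0. \<forall>e>0. \<exists>n. D x (w n) < e)"
proof -
  have "\<forall>k::nat. \<exists>P. finite P \<and> P \<subseteq> X0 \<and> (\<forall>x\<in>X0. \<exists>p\<in>P. D x p < inverse (real (Suc k)))"
    using TB by simp
  then obtain P where P: "\<And>k. finite (P k)" "\<And>k. P k \<subseteq> X0" "\<And>k. \<forall>x\<in>X0. \<exists>p\<in>P k. D x p < inverse (real (Suc k))"
    by metis
  define W where "W = (\<Union>k. P k)"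
  have cW: "countable W" unfolding W_def using P(1) by (auto intro: countable_finite)
  obtain x0 where x0: "x0 \<in> X0" using X0ne by blast
  then obtain p0 where "p0 \<in> P 0" using P(3) by blast
  then have Wne: "W \<noteq> {}" unfolding W_def by blast
  define w where "w = from_nat_into W"
  have rw: "range w = W" unfolding w_def by (rule range_from_nat_into[OF Wne cW])
  have "\<forall>n. w n \<in> X0" using rw P(2) unfolding W_def by blast
  moreover have "\<forall>x\<in>X0. \<forall>e>0. \<exists>n. D x (w n) < e"
  proof (intro ballI allI impI)
    fix x e assume x: "x \<in> X0" and e: "(e::real) > 0"
    obtain k :: nat where k: "inverse (real (Suc k)) < e" using reals_Archimedean e by blast
    obtain p where p: "p \<in> P k" "D x p < inverse (real (Suc k))" using P(3) x by blast
    have "p \<in> range w" using p rw unfolding W_def by blast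
    then obtain n where "p = w n" by blast
    then have "D x (w n) < e" using p k by simp
    then show "\<exists>n. D x (w n) < e" by blast
  qed
  ultimately have "(\<forall>n. w n \<in> X0) \<and> (\<forall>x\<in>X0. \<forall>e>0. \<exists>n. D x (w n) < e)" by (rule conjI)
  then show ?thesis by (rule exI[where x=w])
qed

end

locale setting2 = setting +
  fixes w :: "nat \<Rightarrow> 'a"
  assumes wX0: "\<And>n. w n \<in> X0"
    and wdense: "\<And>x e. x \<in> X0 \<Longrightarrow> e > 0 \<Longrightarrow> \<exists>n. D x (w n) < e"
begin

definition pi :: "'a \<Rightarrow> nat \<Rightarrow> real" where "pi x = (\<lambda>n. D x (w n))"

definition close :: "real \<Rightarrow> (nat \<Rightarrow> real) \<Rightarrow> (nat \<Rightarrow> real) \<Rightarrow> bool"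
  where "close r y y' \<longleftrightarrow> (\<forall>n. \<bar>y n - y' n\<bar> \<le> r)"

lemma close_sym: "close r y y' \<Longrightarrow> close r y' y" unfolding close_def by (simp add: abs_minus_commute)

lemma close_trans: "close r y y' \<Longrightarrow> close s y' y'' \<Longrightarrow> close (r + s) y y''"
  unfolding close_def
proof (intro allI)
  fix n assume a: "\<forall>n. \<bar>y n - y' n\<bar> \<le> r" and b: "\<forall>n. \<bar>y' n - y'' n\<bar> \<le> s"
  show "\<bar>y n - y'' n\<bar> \<le> r + s" using a[rule_format, of n] b[rule_format, of n] by linarith
qed

lemma close_dist: "close r y y' \<Longrightarrow> dist y y' \<le> 2 * r"
  unfolding close_def by (rule dist_fun_le) auto

lemma close_all_eq: "(\<And>e. e > 0 \<Longrightarrow> close e y y') \<Longrightarrow> y = y'"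
proof
  fix n assume h: "\<And>e. e > 0 \<Longrightarrow> close e y y'"
  have "\<bar>y n - y' n\<bar> \<le> 0 + e" if "e > 0" for e using h[OF that] unfolding close_def by simp
  then have "\<bar>y n - y' n\<bar> \<le> 0" by (rule field_le_epsilon)
  then show "y n = y' n" by simp
qed

lemma pi_close_iff: assumes x: "x \<in> X0" and x': "x' \<in> X0"
  shows "close r (pi x) (pi x') \<longleftrightarrow> D x x' \<le> r"
proof
  assume D: "D x x' \<le> r"
  show "close r (pi x) (pi x')" unfolding close_def pi_def
  proof
    fix n
    have "D x (w n) \<le> D x x' + D x' (w n)" "D x' (w n) \<le> D x' x + D x (w n)"
      using D_tri[of x "w n" x'] D_tri[of x' "w n" x] by auto
    then show "\<bar>D x (w n) - D x' (w n)\<bar> \<le> r" using D D_sym[of x x'] by linarith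
  qed
next
  assume c: "close r (pi x) (pi x')"
  show "D x x' \<le> r"
  proof (rule field_le_epsilon)
    fix e :: real assume e: "e > 0"
    have "e/2 > 0" using e by simp
    then obtain n where n: "D x (w n) < e/2" using wdense[OF x] by blast
    have "D x x' \<le> D x (w n) + D (w n) x'" using D_tri[of x x' "w n"] by blast
    moreover have "\<bar>D x (w n) - D x' (w n)\<bar> \<le> r" using c unfolding close_def pi_def by blast
    ultimately show "D x x' \<le> r + e" using n D_sym[of "w n" x'] by linarith
  qed
qed

lemma pi_nonneg: "pi x n \<ge> 0" unfolding pi_def by (rule D_nonneg)

lemma pi_cont: "continuous_on X0 pi"
  unfolding continuous_on_iff
proof (intro ballI allI impI)
  fix x and e :: real assume x: "x \<in> X0" and e: "e > 0"
  have e4: "e/4 > 0" using e by simp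
  obtain d where d: "d > 0" "\<forall>u\<in>X0. dist u x < d \<longrightarrow> D u x < e/4" using D_cont[OF x e4] by blast
  show "\<exists>d>0. \<forall>x'\<in>X0. dist x' x < d \<longrightarrow> dist (pi x') (pi x) < e"
  proof (intro exI conjI ballI impI)
    fix x' assume x': "x' \<in> X0" "dist x' x < d"
    then have "D x' x < e/4" using d(2) by blast
    then have "D x' x \<le> e/4" by simp
    then have "close (e/4) (pi x') (pi x)" using pi_close_iff x x' by blast
    then have "dist (pi x') (pi x) \<le> 2 * (e/4)" by (rule close_dist)
    then show "dist (pi x') (pi x) < e" using e by linarith
  qed (use d in auto)
qed

end



context setting2 begin

definition "S = pi ` X0"
definition "Y = closure S"
definition T
  where "T g (y::nat\<Rightarrow>real) = (\<lambda>n. INF m. y m + D (act g (w m)) (w n))"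

lemma S_Y: "S \<subseteq> Y" unfolding Y_def by (rule closure_subset)

lemma pi_Y: "x \<in> X0 \<Longrightarrow> pi x \<in> Y" using S_Y unfolding S_def by blast

lemma Y_nonneg: assumes y: "y \<in> Y" shows "y n \<ge> 0"
proof (rule ccontr)
  assume "\<not> y n \<ge> 0"
  then have neg: "- y n > 0" by simp
  have "(1/2::real)^(to_nat n) * min (- y n) 1 > 0" using neg by simp
  then obtain s where s: "s \<in> S" "dist s y < (1/2)^(to_nat n) * min (- y n) 1"
    using y unfolding Y_def closure_approachable by blast
  have "\<bar>s n - y n\<bar> < - y n" by (rule coord_small[OF s(2)])
  moreover have "s n \<ge> 0" using s(1) pi_nonneg unfolding S_def by auto
  ultimately show False by linarith
qed

lemma S_unif: assumes e: "e > 0"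
  shows "\<exists>\<delta>>0. \<forall>x\<in>X0. \<forall>x'\<in>X0. dist (pi x) (pi x') < \<delta> \<longrightarrow> D x x' < e"
proof -
  have e6: "e/6 > 0" and e12: "e/12 > 0" using e by auto
  obtain P where P: "finite P" "P \<subseteq> X0" "\<forall>x\<in>X0. \<exists>p\<in>P. D x p < e/6" using TB[OF e6] by blast
  have "\<forall>p\<in>P. \<exists>n. D p (w n) < e/12" using wdense e12 P(2) by blast
  then obtain np where np: "\<And>p. p \<in> P \<Longrightarrow> D p (w (np p)) < e/12" by metis
  define M where "M = np ` P"
  define \<delta> where "\<delta> = Min (insert 1 ((\<lambda>n. (1/2::real)^(to_nat n) * min (e/6) 1) ` M))"
  have finM: "finite (insert 1 ((\<lambda>n. (1/2::real)^(to_nat n) * min (e/6) 1) ` M))" unfolding M_def using P(1) by simp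
  have dpos: "\<delta> > 0" unfolding \<delta>_def using e finM by (subst Min_gr_iff) auto
  have dle: "\<delta> \<le> (1/2::real)^(to_nat n) * min (e/6) 1" if "n \<in> M" for n
    unfolding \<delta>_def using finM that by (intro Min_le) auto
  show ?thesis
  proof (intro exI[of _ \<delta>] conjI ballI impI)
    fix x x' assume x: "x \<in> X0" and x': "x' \<in> X0" and dd: "dist (pi x) (pi x') < \<delta>"
    obtain p where p: "p \<in> P" "D x p < e/6" using P(3) x by blast
    obtain q where q: "q \<in> P" "D x' q < e/6" using P(3) x' by blast
    define n where "n = np p"
    have nM: "n \<in> M" unfolding M_def n_def using p by simp
    have "dist (pi x) (pi x') < (1/2::real)^(to_nat n) * min (e/6) 1" using dd dle[OF nM] by linarith
    then have ab: "\<bar>pi x n - pi x' n\<bar> < e/6" by (rule coord_small)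
    have a': "D p (w n) < e/12" unfolding n_def using np p by simp
    have T1: "D p q \<le> D p (w n) + D (w n) q" by (rule D_tri)
    have T2: "D q (w n) \<le> D q x' + D x' (w n)" by (rule D_tri)
    have T3: "D x (w n) \<le> D x p + D p (w n)" by (rule D_tri)
    have T4: "D x x' \<le> D x p + D p x'" "D p x' \<le> D p q + D q x'" by (rule D_tri)+
    have sy: "D (w n) q = D q (w n)" "D x p = D p x" "D q x' = D x' q" by (rule D_sym)+
    have ab2: "D x' (w n) - D x (w n) \<le> \<bar>pi x n - pi x' n\<bar>" unfolding pi_def by simp
    show "D x x' < e" using ab ab2 a' T1 T2 T3 T4 sy p q by linarith
  qed (rule dpos)
qed

lemma F2: assumes e: "e > 0"
  shows "\<exists>\<delta>>0. \<forall>y\<in>Y. \<forall>y'\<in>Y. dist y y' < \<delta> \<longrightarrow> close e y y'"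
proof -
  obtain \<delta> where d: "\<delta> > 0" "\<forall>x\<in>X0. \<forall>x'\<in>X0. dist (pi x) (pi x') < \<delta> \<longrightarrow> D x x' < e"
    using S_unif[OF e] by blast
  show ?thesis
  proof (intro exI[of _ \<delta>] conjI ballI impI)
    fix y y' assume y: "y \<in> Y" and y': "y' \<in> Y" and dy: "dist y y' < \<delta>"
    show "close e y y'" unfolding close_def
    proof
      fix n
      show "\<bar>y n - y' n\<bar> \<le> e"
      proof (rule field_le_epsilon)
        fix t :: real assume t: "t > 0"
        define r where "r = min ((\<delta> - dist y y')/2) ((1/2::real)^(to_nat n) * min (t/2) 1)"
        have r: "r > 0" unfolding r_def using dy t by simp
        obtain s where s: "s \<in> S" "dist s y < r" using y r unfolding Y_def closure_approachable by blast
        obtain s' where s': "s' \<in> S" "dist s' y' < r" using y' r unfolding Y_def closure_approachable by blast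
        obtain x where x: "x \<in> X0" "s = pi x" using s(1) unfolding S_def by blast
        obtain x' where x': "x' \<in> X0" "s' = pi x'" using s'(1) unfolding S_def by blast
        have t1: "dist s s' \<le> dist s y + dist y s'" by (rule dist_triangle)
        have t2: "dist y s' \<le> dist y y' + dist y' s'" by (rule dist_triangle)
        have t3: "dist y' s' = dist s' y'" by (rule dist_commute)
        have t4: "r \<le> (\<delta> - dist y y')/2" unfolding r_def by (rule min.cobounded1)
        have t6: "dist s s' \<le> dist s y + dist y y' + dist s' y'" using t1 t2 t3 by linarith
        have t4': "2 * r \<le> \<delta> - dist y y'" using t4 by simp
        have t7: "dist s y + dist y y' + dist s' y' < \<delta>" using t4' s(2) s'(2) by linarith
        have "dist s s' < \<delta>" using t6 t7 by linarith
        then have "D x x' < e" using d x x' by blast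
        then have "close e s s'" using pi_close_iff x x' by auto
        then have c1: "\<bar>s n - s' n\<bar> \<le> e" unfolding close_def by blast
        have t5: "r \<le> (1/2::real)^(to_nat n) * min (t/2) 1" unfolding r_def by (rule min.cobounded2)
        have "dist y s < (1/2::real)^(to_nat n) * min (t/2) 1" using s(2) t5 dist_commute[of y s] by linarith
        then have c2: "\<bar>y n - s n\<bar> < t/2" by (rule coord_small)
        have "dist s' y' < (1/2::real)^(to_nat n) * min (t/2) 1" using s'(2) t5 by linarith
        then have c3: "\<bar>s' n - y' n\<bar> < t/2" by (rule coord_small)
        show "\<bar>y n - y' n\<bar> \<le> e + t" using c1 c2 c3 by linarith
      qed
    qed
  qed (rule d(1))
qed

lemma F3: assumes y: "y \<in> Y" and e: "e > 0"
  shows "\<exists>x\<in>X0. close e y (pi x)"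
proof -
  obtain \<delta> where d: "\<delta> > 0" "\<forall>y\<in>Y. \<forall>y'\<in>Y. dist y y' < \<delta> \<longrightarrow> close e y y'" using F2[OF e] by blast
  obtain s where s: "s \<in> S" "dist s y < \<delta>" using y d(1) unfolding Y_def closure_approachable by blast
  have sY: "s \<in> Y" using S_Y s(1) by blast
  have "dist y s < \<delta>" using s(2) dist_commute[of y s] by simp
  then have "close e y s" using d(2) y sY by blast
  then show ?thesis using s(1) unfolding S_def by blast
qed

end


context setting2 begin

lemma wX: "w m \<in> X" using wX0 X0X by blast

lemma T_pi: assumes g: "g \<in> carrier G" and x: "x \<in> X0"
  shows "T g (pi x) = pi (act g x)"
proof
  fix n
  define f where "f m = pi x m + D (act g (w m)) (w n)" for m
  have xX: "x \<in> X" using x X0X by blast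
  have gx: "act g x \<in> X" using act_X[OF g xX] .
  have bdd: "bdd_below (range f)"
    by (rule bdd_belowI[of _ 0]) (auto simp: f_def intro!: add_nonneg_nonneg D_nonneg pi_nonneg)
  have lower: "D (act g x) (w n) \<le> f m" for m
  proof -
    have "D (act g x) (w n) \<le> D (act g x) (act g (w m)) + D (act g (w m)) (w n)" by (rule D_tri)
    moreover have "D (act g x) (act g (w m)) = D x (w m)" using D_act[OF g xX wX] .
    ultimately show ?thesis unfolding f_def pi_def by simp
  qed
  have ge: "D (act g x) (w n) \<le> (INF m. f m)" by (rule cINF_greatest) (auto simp: lower)
  have le: "(INF m. f m) \<le> D (act g x) (w n)"
  proof (rule field_le_epsilon)
    fix e :: real assume e: "e > 0"
    then have "e/2 > 0" by simp
    then obtain m where m: "D x (w m) < e/2" using wdense[OF x] by blast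
    have "(INF m. f m) \<le> f m" by (rule cINF_lower[OF bdd]) simp
    moreover have "D (act g (w m)) (w n) \<le> D (act g (w m)) (act g x) + D (act g x) (w n)" by (rule D_tri)
    moreover have "D (act g (w m)) (act g x) = D (w m) x" using D_act[OF g wX xX] .
    moreover have "D (w m) x = D x (w m)" by (rule D_sym)
    ultimately show "(INF m. f m) \<le> D (act g x) (w n) + e" using m unfolding f_def pi_def by simp
  qed
  have "T g (pi x) n = (INF m. f m)" unfolding T_def f_def by simp
  also have "\<dots> = D (act g x) (w n)" using ge le by simp
  also have "\<dots> = pi (act g x) n" unfolding pi_def by simp
  finally show "T g (pi x) n = pi (act g x) n" .
qed

lemma INF_lip:
  fixes a b c :: "nat \<Rightarrow> real"
  assumes a: "\<And>m. a m \<ge> 0" and b: "\<And>m. b m \<ge> 0" and c: "\<And>m. c m \<ge> 0"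
    and ab: "\<And>m. \<bar>a m - b m\<bar> \<le> r"
  shows "(INF m. a m + c m) - r \<le> (INF m. b m + c m)"
proof (rule cINF_greatest)
  fix m
  have bdd: "bdd_below (range (\<lambda>m. a m + c m))"
    by (rule bdd_belowI[of _ 0]) (auto intro!: add_nonneg_nonneg a c)
  have "(INF m. a m + c m) \<le> a m + c m" by (rule cINF_lower[OF bdd]) simp
  moreover have "a m \<le> b m + r" using ab[of m] by linarith
  ultimately show "(INF m. a m + c m) - r \<le> b m + c m" by linarith
qed simp

lemma T_lip: assumes y: "\<And>m. y m \<ge> 0" and y': "\<And>m. y' m \<ge> 0" and c: "close r y y'"
  shows "close r (T g y) (T g y')"
  unfolding close_def
proof
  fix n
  have c': "\<And>m. \<bar>y m - y' m\<bar> \<le> r" "\<And>m. \<bar>y' m - y m\<bar> \<le> r" using c unfolding close_def by (auto simp: abs_minus_commute)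
  have "(INF m. y m + D (act g (w m)) (w n)) - r \<le> (INF m. y' m + D (act g (w m)) (w n))"
    by (rule INF_lip[OF y y' D_nonneg c'(1)])
  moreover have "(INF m. y' m + D (act g (w m)) (w n)) - r \<le> (INF m. y m + D (act g (w m)) (w n))"
    by (rule INF_lip[OF y' y D_nonneg c'(2)])
  ultimately show "\<bar>T g y n - T g y' n\<bar> \<le> r" unfolding T_def by simp
qed

lemma T_lipY: "y \<in> Y \<Longrightarrow> y' \<in> Y \<Longrightarrow> close r y y' \<Longrightarrow> close r (T g y) (T g y')"
  by (rule T_lip) (auto intro: Y_nonneg)

lemma T_Y: assumes g: "g \<in> carrier G" and y: "y \<in> Y" shows "T g y \<in> Y"
  unfolding Y_def closure_approachable
proof (intro allI impI)
  fix e :: real assume e: "e > 0"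
  then have "e/4 > 0" by simp
  then obtain x where x: "x \<in> X0" "close (e/4) y (pi x)" using F3[OF y] by blast
  have "close (e/4) (T g y) (T g (pi x))" by (rule T_lipY[OF y pi_Y[OF x(1)] x(2)])
  then have "close (e/4) (T g y) (pi (act g x))" using T_pi[OF g x(1)] by simp
  then have "dist (T g y) (pi (act g x)) \<le> 2 * (e/4)" by (rule close_dist)
  then have "dist (pi (act g x)) (T g y) < e" using e by (simp add: dist_commute)
  moreover have "pi (act g x) \<in> S" unfolding S_def using act_X0[OF g x(1)] by blast
  ultimately show "\<exists>s\<in>S. dist s (T g y) < e" by blast
qed

lemma one_closed: "\<one>\<^bsub>G\<^esub> \<in> carrier G" using monoid.one_closed[OF group.is_monoid[OF grp]] .

lemma m_closed: "g \<in> carrier G \<Longrightarrow> h \<in> carrier G \<Longrightarrow> g \<otimes>\<^bsub>G\<^esub> h \<in> carrier G"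
  using monoid.m_closed[OF group.is_monoid[OF grp]] by blast

lemma T_one: assumes y: "y \<in> Y" shows "T \<one>\<^bsub>G\<^esub> y = y"
proof (rule close_all_eq)
  fix e :: real assume e: "e > 0"
  then have "e/2 > 0" by simp
  then obtain x where x: "x \<in> X0" "close (e/2) y (pi x)" using F3[OF y] by blast
  have "close (e/2) (T \<one>\<^bsub>G\<^esub> y) (T \<one>\<^bsub>G\<^esub> (pi x))" by (rule T_lipY[OF y pi_Y[OF x(1)] x(2)])
  moreover have "T \<one>\<^bsub>G\<^esub> (pi x) = pi x" using T_pi[OF one_closed x(1)] act_one x(1) X0X by auto
  ultimately have "close (e/2) (T \<one>\<^bsub>G\<^esub> y) (pi x)" by simp
  then have "close (e/2 + e/2) (T \<one>\<^bsub>G\<^esub> y) y" using close_trans close_sym x(2) by blast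
  then show "close e (T \<one>\<^bsub>G\<^esub> y) y" by simp
qed

lemma T_mult: assumes g: "g \<in> carrier G" and h: "h \<in> carrier G" and y: "y \<in> Y"
  shows "T (g \<otimes>\<^bsub>G\<^esub> h) y = T g (T h y)"
proof (rule close_all_eq)
  fix e :: real assume e: "e > 0"
  then have "e/2 > 0" by simp
  then obtain x where x: "x \<in> X0" "close (e/2) y (pi x)" using F3[OF y] by blast
  have xX: "x \<in> X" using x X0X by blast
  have eq: "T (g \<otimes>\<^bsub>G\<^esub> h) (pi x) = T g (T h (pi x))"
    using T_pi[OF m_closed[OF g h] x(1)] T_pi[OF h x(1)] T_pi[OF g act_X0[OF h x(1)]] act_mult[OF g h xX] by simp
  have c1: "close (e/2) (T (g \<otimes>\<^bsub>G\<^esub> h) y) (T (g \<otimes>\<^bsub>G\<^esub> h) (pi x))" by (rule T_lipY[OF y pi_Y[OF x(1)] x(2)])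
  have c2: "close (e/2) (T h y) (T h (pi x))" by (rule T_lipY[OF y pi_Y[OF x(1)] x(2)])
  have hy: "T h y \<in> Y" by (rule T_Y[OF h y])
  have hx: "T h (pi x) \<in> Y" using T_pi[OF h x(1)] pi_Y[OF act_X0[OF h x(1)]] by simp
  have c3: "close (e/2) (T g (T h y)) (T g (T h (pi x)))" by (rule T_lipY[OF hy hx c2])
  have "close (e/2 + e/2) (T (g \<otimes>\<^bsub>G\<^esub> h) y) (T g (T h y))"
    using close_trans[OF c1[unfolded eq] close_sym[OF c3]] .
  then show "close e (T (g \<otimes>\<^bsub>G\<^esub> h) y) (T g (T h y))" by simp
qed

lemma T_equi: assumes e: "e > 0"
  shows "\<exists>d>0. \<forall>y\<in>Y. \<forall>y'\<in>Y. dist y y' < d \<longrightarrow> (\<forall>g\<in>carrier G. dist (T g y) (T g y') < e)"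
proof -
  have "e/4 > 0" using e by simp
  then obtain d where d: "d > 0" "\<forall>y\<in>Y. \<forall>y'\<in>Y. dist y y' < d \<longrightarrow> close (e/4) y y'" using F2 by blast
  show ?thesis
  proof (intro exI[of _ d] conjI ballI impI)
    fix y y' g assume y: "y \<in> Y" and y': "y' \<in> Y" and dy: "dist y y' < d" and g: "g \<in> carrier G"
    have "close (e/4) y y'" using d(2) y y' dy by blast
    then have "close (e/4) (T g y) (T g y')" by (rule T_lipY[OF y y'])
    then have "dist (T g y) (T g y') \<le> 2 * (e/4)" by (rule close_dist)
    then show "dist (T g y) (T g y') < e" using e by linarith
  qed (rule d(1))
qed

lemma T_cont: "continuous_on Y (T g)"
  unfolding continuous_on_iff
proof (intro ballI allI impI)
  fix y and e :: real assume y: "y \<in> Y" and e: "e > 0"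
  have "e/4 > 0" using e by simp
  then obtain d where d: "d > 0" "\<forall>y\<in>Y. \<forall>y'\<in>Y. dist y y' < d \<longrightarrow> close (e/4) y y'" using F2 by blast
  show "\<exists>d>0. \<forall>y'\<in>Y. dist y' y < d \<longrightarrow> dist (T g y') (T g y) < e"
  proof (intro exI[of _ d] conjI ballI impI)
    fix y' assume y': "y' \<in> Y" and dy: "dist y' y < d"
    have "close (e/4) y' y" using d(2) y y' dy by blast
    then have "close (e/4) (T g y') (T g y)" by (rule T_lipY[OF y' y])
    then have "dist (T g y') (T g y) \<le> 2 * (e/4)" by (rule close_dist)
    then show "dist (T g y') (T g y) < e" using e by linarith
  qed (rule d(1))
qed

lemma Y_closed: "closed Y" unfolding Y_def by simp

lemma T_minimal: assumes y: "y \<in> Y" shows "closure (orbit G T y) = Y"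
proof
  have "orbit G T y \<subseteq> Y" unfolding orbit_def using T_Y y by blast
  then show "closure (orbit G T y) \<subseteq> Y" using Y_closed by (rule closure_minimal)
next
  show "Y \<subseteq> closure (orbit G T y)"
  proof
    fix y' assume y': "y' \<in> Y"
    show "y' \<in> closure (orbit G T y)"
      unfolding closure_approachable
    proof (intro allI impI)
      fix e :: real assume e: "e > 0"
      define \<epsilon> where "\<epsilon> = e/8"
      have ep: "\<epsilon> > 0" unfolding \<epsilon>_def using e by simp
      obtain x where x: "x \<in> X0" "close \<epsilon> y (pi x)" using F3[OF y ep] by blast
      obtain x' where x': "x' \<in> X0" "close \<epsilon> y' (pi x')" using F3[OF y' ep] by blast
      obtain \<delta> where dl: "\<delta> > 0" "\<forall>y\<in>Y. \<forall>y'\<in>Y. dist y y' < \<delta> \<longrightarrow> close \<epsilon> y y'" using F2[OF ep] by blast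
      obtain d where d: "d > 0" "\<forall>u\<in>X0. dist u x' < d \<longrightarrow> dist (pi u) (pi x') < \<delta>"
        using pi_cont x'(1) dl(1) unfolding continuous_on_iff by blast
      have "x' \<in> closure (orbit G act x)" using orbit_dense[OF x(1)] x'(1) X0X by blast
      then obtain p where p: "p \<in> orbit G act x" "dist p x' < d" unfolding closure_approachable using d(1) by blast
      then obtain g where g: "g \<in> carrier G" "p = act g x" unfolding orbit_def by blast
      have gx: "act g x \<in> X0" by (rule act_X0[OF g(1) x(1)])
      have "dist (pi (act g x)) (pi x') < \<delta>" using d(2) gx p g by blast
      then have c1: "close \<epsilon> (pi (act g x)) (pi x')" using dl(2) pi_Y[OF gx] pi_Y[OF x'(1)] by blast
      have "close \<epsilon> (T g y) (T g (pi x))" by (rule T_lipY[OF y pi_Y[OF x(1)] x(2)])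
      then have c0: "close \<epsilon> (T g y) (pi (act g x))" using T_pi[OF g(1) x(1)] by simp
      have "close (\<epsilon> + \<epsilon> + \<epsilon>) (T g y) y'" using close_trans[OF close_trans[OF c0 c1] close_sym[OF x'(2)]] .
      then have "dist (T g y) y' \<le> 2 * (\<epsilon> + \<epsilon> + \<epsilon>)" by (rule close_dist)
      moreover have "2 * (\<epsilon> + \<epsilon> + \<epsilon>) < e" unfolding \<epsilon>_def using e by simp
      ultimately have "dist (T g y) y' < e" by linarith
      moreover have "T g y \<in> orbit G T y" unfolding orbit_def using g(1) by blast
      ultimately show "\<exists>z\<in>orbit G T y. dist z y' < e" by blast
    qed
  qed
qed

lemma Y_compact: "compact Y"
  unfolding compact_eq_totally_bounded
proof (intro conjI allI impI)
  show "uniform_space_class.complete Y" using Y_closed by (simp add: complete_eq_closed)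
next
  fix e :: real assume e: "e > 0"
  then have e8: "e/8 > 0" by simp
  obtain P where P: "finite P" "P \<subseteq> X0" "\<forall>x\<in>X0. \<exists>p\<in>P. D x p < e/8" using TB[OF e8] by blast
  show "\<exists>k. finite k \<and> Y \<subseteq> (\<Union>x\<in>k. ball x e)"
  proof (intro exI[of _ "pi ` P"] conjI)
    show "finite (pi ` P)" using P(1) by simp
    show "Y \<subseteq> (\<Union>x\<in>pi ` P. ball x e)"
    proof
      fix y assume y: "y \<in> Y"
      obtain x where x: "x \<in> X0" "close (e/8) y (pi x)" using F3[OF y e8] by blast
      obtain p where p: "p \<in> P" "D x p < e/8" using P(3) x(1) by blast
      have "close (e/8) (pi x) (pi p)" using pi_close_iff[OF x(1)] P(2) p by auto
      then have "close (e/8 + e/8) y (pi p)" using close_trans x(2) by blast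
      then have "dist y (pi p) \<le> 2 * (e/8 + e/8)" by (rule close_dist)
      then have "y \<in> ball (pi p) e" using e by (simp add: dist_commute)
      then show "y \<in> (\<Union>x\<in>pi ` P. ball x e)" using p(1) by blast
    qed
  qed
qed

lemma Y_ne: "Y \<noteq> {}" using X0ne pi_Y by blast

lemma system: "minimal_equicontinuous_system G Y T"
  unfolding minimal_equicontinuous_system_def homeo_action_def
  using Y_compact Y_ne grp T_Y T_cont T_one T_mult T_minimal T_equi by blast

lemma factor: "equivariant_factor G X0 act Y T pi"
  unfolding equivariant_factor_def using pi_cont pi_Y T_pi by auto

lemma final: "S_eq G X0 act \<subseteq> K0 lam X0 N"
proof
  fix z assume z: "z \<in> S_eq G X0 act"
  have "S_pi X0 pi \<in> {S_pi X0 \<pi> | \<pi>. \<exists>Y actY. minimal_equicontinuous_system G Y actY \<and> equivariant_factor G X0 act Y actY \<pi>}"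
    using system factor by blast
  then have "z \<in> S_pi X0 pi" using z unfolding S_eq_def by blast
  then obtain x x' where xx: "z = (x, x')" "x \<in> X0" "x' \<in> X0" "pi x = pi x'" unfolding S_pi_def by blast
  have "close 0 (pi x) (pi x')" using xx(4) unfolding close_def by simp
  then have "D x x' \<le> 0" using pi_close_iff xx(2,3) by blast
  then have "D x x' = 0" using D_nonneg[of x x'] by linarith
  then show "z \<in> K0 lam X0 N" unfolding K0_def using xx by simp
qed

end

theorem mainTheorem7:
  fixes G :: "('g, 'm) monoid_scheme"
    and X X0 :: "'a::metric_space set"
    and act :: "'g \<Rightarrow> 'a \<Rightarrow> 'a"
    and lam :: "'a measure"
  assumes "compact X"
    and "homeo_action G X act"
    and "top_transitive G X act"
    and "X0 \<subseteq> transitive_points G X act"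
    and "closure X0 = X"
    and "G_invariant G act X0"
    and "prob_space lam"
    and "sets lam = sets (restrict_space borel X)"
    and "\<forall>g\<in>carrier G. \<forall>A\<in>sets lam. measure lam (act g -` A \<inter> X) = measure lam A"
    and "X0 \<in> sets lam"
    and "measure lam X0 = 1"
  shows "S_eq G X0 act \<subseteq> (\<Inter>N\<in>closed_inv_relations G X act. K0 lam X0 N)"
proof
  fix z assume z: "z \<in> S_eq G X0 act"
  show "z \<in> (\<Inter>N\<in>closed_inv_relations G X act. K0 lam X0 N)"
  proof
    fix N assume N: "N \<in> closed_inv_relations G X act"
    interpret setting lam G X X0 act N
      by (intro setting.intro setting_axioms.intro) (use assms N in auto)
    obtain w :: "nat \<Rightarrow> 'a" where w: "\<forall>n. w n \<in> X0" "\<forall>x\<in>X0. \<forall>e>0. \<exists>n. d_N lam N x (w n) < e"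
      using dense_seq by blast
    interpret setting2 lam G X X0 act N w
      by (intro setting2.intro setting2_axioms.intro) (use w in \<open>auto intro: setting_axioms\<close>)
    show "z \<in> K0 lam X0 N" using final z by blast
  qed
qed

end
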